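(* Let $d$ and $m$ be positive integers, let $a_1=(a_{11},\ldots,a_{1k_1}),\ldots,a_m=(a_{m1},\ldots,a_{mk_m})$ be partitions of $d$ of lengths $k_1,\ldots,k_m$, and suppose that $t=k_1+\cdots+k_m-d(m-1)\geq 1$. Then there exist a partition $c=(c_1,\ldots,c_t)$ of $d$ of length $t$ and refinements $r_i:a_i\to c$ ($i=1,\ldots,m$) such that for each $j=1,\ldots,t$, the sum of the lengths of the partitions $r_1^{-1}(c_j),\ldots,r_m^{-1}(c_j)$ of $c_j$ equals $c_j(m-1)+1$.
   Context: A partition of $d$ is a multiset of positive integers summing to $d$; its length is its number of elements. For partitions $a$ and $b$ of $d$, a refinement $r:b\to a$ is a map of multisets such that for each part $a_i$ of $a$, the multiset $r^{-1}(a_i)$ is a partition of $a_i$. *)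

theory Defs
  imports Main
begin

text \<open>A partition of d is represented as a list of positive naturals (an enumeration
  of the multiset of parts) summing to d; its length is the list length.\<close>
definition is_partition :: "nat \<Rightarrow> nat list \<Rightarrow> bool" where
  "is_partition d p \<longleftrightarrow> (\<forall>x\<in>set p. 0 < x) \<and> sum_list p = d"

definition fiber :: "nat list \<Rightarrow> (nat \<Rightarrow> nat) \<Rightarrow> nat \<Rightarrow> nat list" where
  "fiber b r j = map (\<lambda>l. b ! l) (filter (\<lambda>l. r l = j) [0..<length b])"

definition is_refinement :: "nat list \<Rightarrow> nat list \<Rightarrow> (nat \<Rightarrow> nat) \<Rightarrow> bool" where
  "is_refinement b a r \<longleftrightarrow>
     (\<forall>l<length b. r l < length a) \<and>
     (\<forall>j<length a. is_partition (a ! j) (fiber b r j))"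

end

theory Submission
  imports Defs
begin

lemma fiber_len: "length (fiber b r j) = card {l. l < length b \<and> r l = j}"
proof -
  have "length (fiber b r j) = length (filter (\<lambda>l. r l = j) [0..<length b])"
    by (simp add: fiber_def)
  also have "\<dots> = card (set (filter (\<lambda>l. r l = j) [0..<length b]))"
    by (rule distinct_card[symmetric]) simp
  also have "set (filter (\<lambda>l. r l = j) [0..<length b]) = {l. l < length b \<and> r l = j}"
    by auto
  finally show ?thesis .
qed

lemma fiber_sum: "sum_list (fiber b r j) = (\<Sum>l\<in>{l. l < length b \<and> r l = j}. b ! l)"
proof -
  have "sum_list (fiber b r j) = sum ((!) b) (set (filter (\<lambda>l. r l = j) [0..<length b]))"
    unfolding fiber_def by (rule sum_list_distinct_conv_sum_set) simp
  also have "set (filter (\<lambda>l. r l = j) [0..<length b]) = {l. l < length b \<and> r l = j}"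
    by auto
  finally show ?thesis .
qed

lemma fiber_set: "set (fiber b r j) \<subseteq> set b"
  by (auto simp: fiber_def)

lemma len_le_sum: "\<forall>x\<in>set p. 0 < x \<Longrightarrow> length p \<le> sum_list p"
  by (induction p) auto

lemma fiber_const: "fiber b (\<lambda>_. 0) 0 = b"
  by (simp add: fiber_def map_nth)

lemma filter_eq_single: "j < n \<Longrightarrow> filter (\<lambda>l. l = j) [0..<n] = [j]"
proof (induction n)
  case 0 then show ?case by simp
next
  case (Suc n)
  show ?case
  proof (cases "j < n")
    case True
    then show ?thesis using Suc by simp
  next
    case False
    then have "j = n" using Suc by simp
    moreover have "filter (\<lambda>l. l = n) [0..<n] = []" by (simp add: filter_empty_conv)
    ultimately show ?thesis by simp
  qed
qed

lemma fiber_id: "j < length b \<Longrightarrow> fiber b (\<lambda>l. l) j = [b ! j]"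
  by (simp add: fiber_def filter_eq_single)

definition shiftmap :: "nat \<Rightarrow> (nat \<Rightarrow> nat) \<Rightarrow> nat \<Rightarrow> nat" where
  "shiftmap n r l = (if l < n then 0 else Suc (r (l - n)))"

lemma fiber_shift0: "fiber (a1 @ a2) (shiftmap (length a1) r) 0 = a1"
proof -
  let ?P = "\<lambda>l. shiftmap (length a1) r l = 0"
  have u: "[0..<length (a1 @ a2)] = [0..<length a1] @ [length a1..<length a1 + length a2]"
    unfolding length_append by (rule upt_add_eq_append) simp
  have f2: "filter ?P [length a1..<length a1 + length a2] = []"
    by (auto simp: filter_empty_conv shiftmap_def)
  have f1: "filter ?P [0..<length a1] = [0..<length a1]"
    by (rule filter_True) (auto simp: shiftmap_def)
  have m: "map (\<lambda>l. (a1 @ a2) ! l) [0..<length a1] = a1"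
    by (rule nth_equalityI) (auto simp: nth_append)
  show ?thesis
    unfolding fiber_def u filter_append f1 f2 using m by simp
qed

lemma fiber_shiftS: "fiber (a1 @ a2) (shiftmap (length a1) r) (Suc j) = fiber a2 r j"
proof -
  let ?P = "\<lambda>l. shiftmap (length a1) r l = Suc j"
  have u0: "[0..<length (a1 @ a2)] = [0..<length a1] @ [length a1..<length a1 + length a2]"
    unfolding length_append by (rule upt_add_eq_append) simp
  have u1: "[length a1..<length a1 + length a2] = map (\<lambda>i. i + length a1) [0..<length a2]"
    by (simp only: map_add_upt add.commute)
  have u: "[0..<length (a1 @ a2)] = [0..<length a1] @ map (\<lambda>i. i + length a1) [0..<length a2]"
    using u0 u1 by simp
  have f1: "filter ?P [0..<length a1] = []"
    by (auto simp: filter_empty_conv shiftmap_def)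
  have f2: "filter ?P (map (\<lambda>i. i + length a1) [0..<length a2])
      = map (\<lambda>i. i + length a1) (filter (\<lambda>l. r l = j) [0..<length a2])"
    by (simp add: filter_map comp_def shiftmap_def)
  show ?thesis
    unfolding fiber_def u filter_append f1 f2 by (simp add: nth_append)
qed

lemma pos_nil: "\<forall>x\<in>set p. 0 < (x::nat) \<Longrightarrow> sum_list p = 0 \<Longrightarrow> p = []"
  by (cases p) auto

lemma split_ex:
  "\<lbrakk> \<forall>x\<in>set a. 0<x; \<forall>x\<in>set b. 0<x; sum_list a = sum_list b; h \<le> 0;
     h + int (length a) + int (length b) - int (sum_list a) \<ge> 2 \<rbrakk> \<Longrightarrow>
   \<exists>a1 a2 b1 b2. a = a1 @ a2 \<and> b = b1 @ b2 \<and> a2 \<noteq> [] \<and> sum_list a1 = sum_list b1 \<and>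
     h + int (length a1) + int (length b1) - int (sum_list a1) = 1"
proof (induction "sum_list a" arbitrary: a b h rule: less_induct)
  case less
  note pa = less.prems(1) and pb = less.prems(2) and sab = less.prems(3)
    and h0 = less.prems(4) and ex = less.prems(5)
  show ?case
  proof (cases a)
    case Nil
    then have "b = []" using pb sab pos_nil by simp
    then show ?thesis using ex h0 Nil by simp
  next
    case (Cons x at)
    note a = Cons
    show ?thesis
    proof (cases b)
      case Nil
      then have "a = []" using pa sab pos_nil by simp
      then show ?thesis using a by simp
    next
      case (Cons y bt)
      note b = Cons
      have x0: "0 < x" and y0: "0 < y" using pa pb a b by auto
      have pat: "\<forall>x\<in>set at. 0<x" and pbt: "\<forall>x\<in>set bt. 0<x" using pa pb a b by auto
      have sxy: "x + sum_list at = y + sum_list bt" using sab a b by simp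
      have ex': "h + int (length at) + int (length bt) + 2 - int x - int (sum_list at) \<ge> 2"
        using ex a b by simp
      consider "x = y" | "x < y" | "y < x" by linarith
      then show ?thesis
      proof cases
        case 1
        have sab': "sum_list at = sum_list bt" using sxy 1 by simp
        show ?thesis
        proof (cases "h + 2 - int x = 1")
          case True
          have "at \<noteq> []"
          proof
            assume "at = []"
            then have "bt = []" using sab' pbt pos_nil by simp
            then show False using ex' True \<open>at = []\<close> by simp
          qed
          show ?thesis
            apply (rule exI[of _ "[x]"], rule exI[of _ at], rule exI[of _ "[y]"], rule exI[of _ bt])
            using a b 1 True \<open>at \<noteq> []\<close> by simp
        next
          case False
          have h1: "h + 2 - int x \<le> 0" using False h0 x0 by linarith
          have lt: "sum_list at < sum_list a" using a x0 by simp
          have "\<exists>a1 a2 b1 b2. at = a1 @ a2 \<and> bt = b1 @ b2 \<and> a2 \<noteq> [] \<and> sum_list a1 = sum_list b1 \<and>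
             (h + 2 - int x) + int (length a1) + int (length b1) - int (sum_list a1) = 1"
            by (rule less.hyps[OF lt pat pbt sab' h1]) (use ex' in linarith)
          then obtain a1 a2 b1 b2 where H: "at = a1 @ a2" "bt = b1 @ b2" "a2 \<noteq> []" "sum_list a1 = sum_list b1"
             "(h + 2 - int x) + int (length a1) + int (length b1) - int (sum_list a1) = 1" by blast
          show ?thesis
            apply (rule exI[of _ "x # a1"], rule exI[of _ a2], rule exI[of _ "y # b1"], rule exI[of _ b2])
            using a b 1 H by simp
        qed
      next
        case 2
        have lt: "sum_list at < sum_list a" using a x0 by simp
        have pb': "\<forall>z\<in>set ((y - x) # bt). 0 < z" using pbt 2 by simp
        have sab': "sum_list at = sum_list ((y - x) # bt)" using sxy 2 by simp
        have h1: "h + 1 - int x \<le> 0" using h0 x0 by linarith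
        have "\<exists>a1 a2 b1 b2. at = a1 @ a2 \<and> (y - x) # bt = b1 @ b2 \<and> a2 \<noteq> [] \<and> sum_list a1 = sum_list b1 \<and>
             (h + 1 - int x) + int (length a1) + int (length b1) - int (sum_list a1) = 1"
          by (rule less.hyps[OF lt pat pb' sab' h1]) (use ex' in simp)
        then obtain a1 a2 b1 b2 where H: "at = a1 @ a2" "(y - x) # bt = b1 @ b2" "a2 \<noteq> []"
          "sum_list a1 = sum_list b1"
          "(h + 1 - int x) + int (length a1) + int (length b1) - int (sum_list a1) = 1" by blast
        show ?thesis
        proof (cases b1)
          case Nil
          then have "a1 = []" using H(4) H(1) pat pos_nil by simp
          then show ?thesis using H(5) Nil h0 x0 by simp
        next
          case (Cons z b1')
          then have z: "z = y - x" "bt = b1' @ b2" using H(2) by auto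
          show ?thesis
            apply (rule exI[of _ "x # a1"], rule exI[of _ a2], rule exI[of _ "y # b1'"], rule exI[of _ b2])
            using a b H Cons z 2 by simp
        qed
      next
        case 3
        have lt: "sum_list ((x - y) # at) < sum_list a" using a y0 3 by simp
        have pa': "\<forall>z\<in>set ((x - y) # at). 0 < z" using pat 3 by simp
        have sab': "sum_list ((x - y) # at) = sum_list bt" using sxy 3 by simp
        have h1: "h + 1 - int y \<le> 0" using h0 y0 by linarith
        have "\<exists>a1 a2 b1 b2. (x - y) # at = a1 @ a2 \<and> bt = b1 @ b2 \<and> a2 \<noteq> [] \<and> sum_list a1 = sum_list b1 \<and>
             (h + 1 - int y) + int (length a1) + int (length b1) - int (sum_list a1) = 1"
          by (rule less.hyps[OF lt pa' pbt sab' h1]) (use ex' 3 in simp)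
        then obtain a1 a2 b1 b2 where H: "(x - y) # at = a1 @ a2" "bt = b1 @ b2" "a2 \<noteq> []"
          "sum_list a1 = sum_list b1"
          "(h + 1 - int y) + int (length a1) + int (length b1) - int (sum_list a1) = 1" by blast
        show ?thesis
        proof (cases a1)
          case Nil
          then have "b1 = []" using H(4) H(2) pbt pos_nil by simp
          then show ?thesis using H(5) Nil h0 y0 by simp
        next
          case (Cons z a1')
          then have z: "z = x - y" "at = a1' @ a2" using H(1) by auto
          show ?thesis
            apply (rule exI[of _ "x # a1'"], rule exI[of _ a2], rule exI[of _ "y # b1"], rule exI[of _ b2])
            using a b H Cons z 3 by (simp, intro conjI; linarith)
        qed
      qed
    qed
  qed
qed

lemma comp_group:
  assumes "\<forall>l<length b. r l < (n::nat)"
  shows "(\<Sum>l\<in>{l. l < length b \<and> q (r l) = j}. h l)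
       = (\<Sum>k\<in>{k. k < n \<and> q k = j}. \<Sum>l\<in>{l. l < length b \<and> r l = k}. h l)"
proof -
  let ?S = "{l. l < length b \<and> q (r l) = j}" and ?T = "{k. k < n \<and> q k = j}"
  have "r ` ?S \<subseteq> ?T" using assms by auto
  then have "(\<Sum>y\<in>?T. sum h {x. x \<in> ?S \<and> r x = y}) = sum h ?S"
    by (intro sum.group) auto
  moreover have "(\<Sum>y\<in>?T. sum h {x. x \<in> ?S \<and> r x = y})
      = (\<Sum>k\<in>?T. \<Sum>l\<in>{l. l < length b \<and> r l = k}. h l)"
    by (rule sum.cong) (auto intro!: sum.cong)
  ultimately show ?thesis by simp
qed

lemma fiber_comp_len:
  assumes "\<forall>l<length b. r l < length c'"
  shows "length (fiber b (q \<circ> r) j) = (\<Sum>k\<in>{k. k < length c' \<and> q k = j}. length (fiber b r k))"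
  unfolding fiber_len card_eq_sum comp_def by (rule comp_group[OF assms])

lemma fiber_comp_sum:
  assumes "\<forall>l<length b. r l < length c'"
  shows "sum_list (fiber b (q \<circ> r) j) = (\<Sum>k\<in>{k. k < length c' \<and> q k = j}. sum_list (fiber b r k))"
  using comp_group[OF assms, where q=q and j=j and h="\<lambda>l. b ! l"] by (simp add: fiber_sum)

lemma refine_comp:
  assumes pb: "\<forall>x\<in>set b. 0<x" and r: "is_refinement b c' r" and q: "is_refinement c' c q"
  shows "is_refinement b c (q \<circ> r)"
  unfolding is_refinement_def
proof (intro conjI allI impI)
  have rl: "\<forall>l<length b. r l < length c'" using r by (simp add: is_refinement_def)
  fix l assume "l < length b"
  then show "(q \<circ> r) l < length c" using rl q by (simp add: is_refinement_def)
next
  have rl: "\<forall>l<length b. r l < length c'" using r by (simp add: is_refinement_def)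
  fix j assume j: "j < length c"
  have "sum_list (fiber b (q \<circ> r) j) = (\<Sum>k\<in>{k. k < length c' \<and> q k = j}. sum_list (fiber b r k))"
    by (rule fiber_comp_sum[OF rl])
  also have "\<dots> = (\<Sum>k\<in>{k. k < length c' \<and> q k = j}. c' ! k)"
    using r by (intro sum.cong) (auto simp: is_refinement_def is_partition_def)
  also have "\<dots> = sum_list (fiber c' q j)" by (simp add: fiber_sum)
  also have "\<dots> = c ! j" using q j by (simp add: is_refinement_def is_partition_def)
  finally show "is_partition (c ! j) (fiber b (q \<circ> r) j)"
    using pb fiber_set[of b "q \<circ> r" j] unfolding is_partition_def by auto
qed

lemma refine_cons:
  assumes "is_partition e a1" and r: "is_refinement a2 c' r"
  shows "is_refinement (a1 @ a2) (e # c') (shiftmap (length a1) r)"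
  unfolding is_refinement_def
proof (intro conjI allI impI)
  fix l assume "l < length (a1 @ a2)"
  then show "shiftmap (length a1) r l < length (e # c')"
    using r by (auto simp: shiftmap_def is_refinement_def)
next
  fix j assume j: "j < length (e # c')"
  show "is_partition ((e # c') ! j) (fiber (a1 @ a2) (shiftmap (length a1) r) j)"
  proof (cases j)
    case 0 then show ?thesis using assms by (simp add: fiber_shift0)
  next
    case (Suc j') then show ?thesis using r j by (simp add: fiber_shiftS is_refinement_def)
  qed
qed

lemma refine_const: "is_partition d a \<Longrightarrow> is_refinement a [d] (\<lambda>_. 0)"
  by (auto simp: is_refinement_def fiber_const)

lemma two:
  assumes "\<forall>x\<in>set a. 0<x" "\<forall>x\<in>set b. 0<x" "sum_list a = d" "sum_list b = d"
    "length a + length b \<ge> d + 1"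
  shows "\<exists>c r q. is_partition d c \<and> length c + d = length a + length b \<and>
    is_refinement a c r \<and> is_refinement b c q \<and>
    (\<forall>j<length c. length (fiber a r j) + length (fiber b q j) = c ! j + 1)"
  using assms
proof (induction d arbitrary: a b rule: less_induct)
  case (less d)
  note pa = less.prems(1) and pb = less.prems(2) and sa = less.prems(3) and sb = less.prems(4)
    and len = less.prems(5)
  show ?case
  proof (cases "length a + length b = d + 1")
    case True
    have "d \<noteq> 0"
    proof
      assume "d = 0"
      then have "a = []" "b = []" using pa pb sa sb pos_nil by auto
      then show False using True \<open>d = 0\<close> by simp
    qed
    have "is_partition d [d]" using \<open>d \<noteq> 0\<close> by (simp add: is_partition_def)
    moreover have "is_refinement a [d] (\<lambda>_. 0)" "is_refinement b [d] (\<lambda>_. 0)"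
      using pa pb sa sb by (auto intro!: refine_const simp: is_partition_def)
    ultimately show ?thesis using True
      by (intro exI[of _ "[d]"] exI[of _ "\<lambda>_. 0"]) (auto simp: fiber_const)
  next
    case False
    have "\<exists>a1 a2 b1 b2. a = a1 @ a2 \<and> b = b1 @ b2 \<and> a2 \<noteq> [] \<and> sum_list a1 = sum_list b1 \<and>
       0 + int (length a1) + int (length b1) - int (sum_list a1) = 1"
      by (rule split_ex[OF pa pb]) (use sa sb len False in auto)
    then obtain a1 a2 b1 b2 where H: "a = a1 @ a2" "b = b1 @ b2" "a2 \<noteq> []" "sum_list a1 = sum_list b1"
       "int (length a1) + int (length b1) - int (sum_list a1) = 1" by auto
    define e where "e = sum_list a1"
    have H5: "length a1 + length b1 = e + 1" using H(5) e_def by linarith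
    have pa1: "\<forall>x\<in>set a1. 0<x" and pa2: "\<forall>x\<in>set a2. 0<x" using pa H(1) by auto
    have pb1: "\<forall>x\<in>set b1. 0<x" and pb2: "\<forall>x\<in>set b2. 0<x" using pb H(2) by auto
    have e0: "0 < e"
    proof (rule ccontr)
      assume "\<not> 0 < e"
      then have "sum_list a1 = 0" "sum_list b1 = 0" using e_def H(4) by auto
      then have "a1 = []" "b1 = []" using pa1 pb1 pos_nil by auto
      then show False using H5 by simp
    qed
    have sa2: "sum_list a2 = d - e" and sb2: "sum_list b2 = d - e" and ed: "e \<le> d"
      using sa sb H e_def by auto
    have "sum_list a2 > 0" using pa2 H(3) by (cases a2) auto
    then have lt: "d - e < d" using sa2 e0 by linarith
    have len2: "length a2 + length b2 \<ge> (d - e) + 1" using len False H H5 ed by simp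
    obtain c' r' q' where IH: "is_partition (d - e) c'" "length c' + (d - e) = length a2 + length b2"
      "is_refinement a2 c' r'" "is_refinement b2 c' q'"
      "\<forall>j<length c'. length (fiber a2 r' j) + length (fiber b2 q' j) = c' ! j + 1"
      using less.IH[OF lt pa2 pb2 sa2 sb2 len2] by blast
    have pe1: "is_partition e a1" and pe2: "is_partition e b1"
      using pa1 pb1 e_def H(4) by (auto simp: is_partition_def)
    show ?thesis
    proof (intro exI conjI)
      show "is_partition d (e # c')" using IH(1) e0 ed by (auto simp: is_partition_def)
      show "length (e # c') + d = length a + length b" using IH(2) H H5 ed by simp
      show "is_refinement a (e # c') (shiftmap (length a1) r')"
        using refine_cons[OF pe1 IH(3)] H(1) by simp
      show "is_refinement b (e # c') (shiftmap (length b1) q')"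
        using refine_cons[OF pe2 IH(4)] H(2) by simp
      show "\<forall>j<length (e # c'). length (fiber a (shiftmap (length a1) r') j)
          + length (fiber b (shiftmap (length b1) q') j) = (e # c') ! j + 1"
      proof (intro allI impI)
        fix j assume j: "j < length (e # c')"
        show "length (fiber a (shiftmap (length a1) r') j)
          + length (fiber b (shiftmap (length b1) q') j) = (e # c') ! j + 1"
        proof (cases j)
          case 0 then show ?thesis using H H5 by (simp add: fiber_shift0)
        next
          case (Suc j') then show ?thesis using H IH(5) j by (simp add: fiber_shiftS)
        qed
      qed
    qed
  qed
qed

lemma refine_id:
  assumes "\<forall>x\<in>set b. 0 < x"
  shows "is_refinement b b (\<lambda>l. l)"
  using assms by (auto simp: is_refinement_def fiber_id is_partition_def)

lemma gen:
  assumes "\<forall>i<Suc n. is_partition d (a i)" "(\<Sum>i<Suc n. length (a i)) \<ge> d * n + 1"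
  shows "\<exists>c r. is_partition d c \<and> length c + d * n = (\<Sum>i<Suc n. length (a i)) \<and>
    (\<forall>i<Suc n. is_refinement (a i) c (r i)) \<and>
    (\<forall>j<length c. (\<Sum>i<Suc n. length (fiber (a i) (r i) j)) = c ! j * n + 1)"
  using assms
proof (induction n)
  case 0
  have p: "is_partition d (a 0)" using 0 by simp
  then have pos: "\<forall>x\<in>set (a 0). 0 < x" by (simp add: is_partition_def)
  show ?case
  proof (intro exI[of _ "a 0"] exI[of _ "\<lambda>_ l. l"] conjI allI impI)
    show "is_partition d (a 0)" by (rule p)
    show "length (a 0) + d * 0 = (\<Sum>i<Suc 0. length (a i))" by simp
    fix i assume "i < Suc 0"
    then show "is_refinement (a i) (a 0) (\<lambda>l. l)" using refine_id[OF pos] by simp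
  next
    fix j assume "j < length (a 0)"
    then show "(\<Sum>i<Suc 0. length (fiber (a i) (\<lambda>l. l) j)) = a 0 ! j * 0 + 1"
      by (simp add: fiber_id)
  qed
next
  case (Suc n)
  have parts: "\<forall>i<Suc n. is_partition d (a i)" using Suc.prems(1) by simp
  have plast: "is_partition d (a (Suc n))" using Suc.prems(1) by simp
  have lk: "length (a (Suc n)) \<le> d" using plast len_le_sum by (auto simp: is_partition_def)
  have sumeq: "(\<Sum>i<Suc (Suc n). length (a i)) = (\<Sum>i<Suc n. length (a i)) + length (a (Suc n))"
    by simp
  have "(\<Sum>i<Suc n. length (a i)) \<ge> d * n + 1" using Suc.prems(2) sumeq lk by simp
  then obtain c' r' where IH: "is_partition d c'" "length c' + d * n = (\<Sum>i<Suc n. length (a i))"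
    "\<forall>i<Suc n. is_refinement (a i) c' (r' i)"
    "\<forall>j<length c'. (\<Sum>i<Suc n. length (fiber (a i) (r' i) j)) = c' ! j * n + 1"
    using Suc.IH[OF parts] by blast
  have "length c' + length (a (Suc n)) \<ge> d + 1" using IH(2) Suc.prems(2) sumeq by simp
  then obtain c q s where T: "is_partition d c" "length c + d = length c' + length (a (Suc n))"
    "is_refinement c' c q" "is_refinement (a (Suc n)) c s"
    "\<forall>j<length c. length (fiber c' q j) + length (fiber (a (Suc n)) s j) = c ! j + 1"
    using two[of c' "a (Suc n)" d] IH(1) plast by (auto simp: is_partition_def)
  define R where "R = (\<lambda>i. if i = Suc n then s else q \<circ> r' i)"
  show ?case
  proof (intro exI[of _ c] exI[of _ R] conjI allI impI)
    show "is_partition d c" by (rule T(1))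
    show "length c + d * Suc n = (\<Sum>i<Suc (Suc n). length (a i))"
      using T(2) IH(2) sumeq by simp
    fix i assume i: "i < Suc (Suc n)"
    show "is_refinement (a i) c (R i)"
    proof (cases "i = Suc n")
      case True then show ?thesis using T(4) by (simp add: R_def)
    next
      case False
      then have "i < Suc n" using i by simp
      then have "is_refinement (a i) c (q \<circ> r' i)"
        using refine_comp[OF _ _ T(3)] IH(3) parts by (auto simp: is_partition_def)
      then show ?thesis using False by (simp add: R_def)
    qed
  next
    fix j assume j: "j < length c"
    let ?K = "{k. k < length c' \<and> q k = j}"
    have "(\<Sum>i<Suc n. length (fiber (a i) (R i) j))
        = (\<Sum>i<Suc n. \<Sum>k\<in>?K. length (fiber (a i) (r' i) k))"
    proof (rule sum.cong)
      fix i assume "i \<in> {..<Suc n}"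
      then have "i < Suc n" by simp
      then have rl: "\<forall>l<length (a i). r' i l < length c'" using IH(3) by (simp add: is_refinement_def)
      show "length (fiber (a i) (R i) j) = (\<Sum>k\<in>?K. length (fiber (a i) (r' i) k))"
        using fiber_comp_len[OF rl] \<open>i < Suc n\<close> by (simp add: R_def)
    qed simp
    also have "\<dots> = (\<Sum>k\<in>?K. \<Sum>i<Suc n. length (fiber (a i) (r' i) k))"
      by (rule sum.swap)
    also have "\<dots> = (\<Sum>k\<in>?K. c' ! k * n + 1)"
      using IH(4) by (intro sum.cong) auto
    also have "\<dots> = (\<Sum>k\<in>?K. c' ! k) * n + card ?K"
      by (simp only: sum.distrib sum_distrib_right card_eq_sum)
    also have "(\<Sum>k\<in>?K. c' ! k) = c ! j"
      using T(3) j fiber_sum[of c' q j] by (simp add: is_refinement_def is_partition_def)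
    also have "card ?K = length (fiber c' q j)" by (simp add: fiber_len)
    finally have A: "(\<Sum>i<Suc n. length (fiber (a i) (R i) j)) = c ! j * n + length (fiber c' q j)" .
    have "(\<Sum>i<Suc (Suc n). length (fiber (a i) (R i) j))
        = (\<Sum>i<Suc n. length (fiber (a i) (R i) j)) + length (fiber (a (Suc n)) s j)"
      by (simp add: R_def)
    then show "(\<Sum>i<Suc (Suc n). length (fiber (a i) (R i) j)) = c ! j * Suc n + 1"
      using A T(5) j by simp
  qed
qed

theorem lemma5p6:
  fixes d m :: nat and a :: "nat \<Rightarrow> nat list"
  assumes "0 < d" and "0 < m"
    and "\<forall>i<m. is_partition d (a i)"
    and "(\<Sum>i<m. int (length (a i))) - int d * (int m - 1) \<ge> 1"
  shows "\<exists>c r. is_partition d c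
           \<and> int (length c) = (\<Sum>i<m. int (length (a i))) - int d * (int m - 1)
           \<and> (\<forall>i<m. is_refinement (a i) c (r i))
           \<and> (\<forall>j<length c. (\<Sum>i<m. length (fiber (a i) (r i) j)) = c ! j * (m - 1) + 1)"
proof -
  obtain n where m: "m = Suc n" using assms(2) by (cases m) auto
  have e1: "(\<Sum>i<m. int (length (a i))) = int (\<Sum>i<m. length (a i))" by simp
  have e2: "int d * (int m - 1) = int (d * n)" using m by simp
  have "int (d * n + 1) \<le> int (\<Sum>i<Suc n. length (a i))" using assms(4) e1 e2 m by simp
  then have "(\<Sum>i<Suc n. length (a i)) \<ge> d * n + 1" by (simp only: of_nat_le_iff)
  then obtain c r where G: "is_partition d c" "length c + d * n = (\<Sum>i<Suc n. length (a i))"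
    "\<forall>i<Suc n. is_refinement (a i) c (r i)"
    "\<forall>j<length c. (\<Sum>i<Suc n. length (fiber (a i) (r i) j)) = c ! j * n + 1"
    using gen[of n d a] assms(3) m by blast
  show ?thesis
  proof (intro exI[of _ c] exI[of _ r] conjI)
    show "is_partition d c" by (rule G(1))
    have "int (length c) + int (d * n) = int (\<Sum>i<m. length (a i))"
      using G(2) m by (metis of_nat_add)
    then show "int (length c) = (\<Sum>i<m. int (length (a i))) - int d * (int m - 1)"
      using e1 e2 by linarith
    show "\<forall>i<m. is_refinement (a i) c (r i)" using G(3) m by simp
    show "\<forall>j<length c. (\<Sum>i<m. length (fiber (a i) (r i) j)) = c ! j * (m - 1) + 1"
      using G(4) m by simp
  qed
qed

end
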